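(* Let $\mathcal{N}=\{1,\ldots,N\}$ be a set of players and $\mathcal{M}=\{1,\ldots,M\}$ a set of channels. Let $\mathcal{G}$ be an arbitrary undirected interference graph on vertex set $\mathcal{N}$ (no self-loops), and for each $n\in\mathcal{N}$ let $\mathcal{J}_n\subseteq\mathcal{N}\setminus\{n\}$ denote the set of neighbors of $n$. Each channel $m$ has a random transmission rate $s_m$ taking values in a finite set of nonnegative rates, and all channels have the same expected rate $\mathbf{E}[s_m]=\bar s$. For $a=(a_1,\ldots,a_N)\in\mathcal{M}^N$ let $c_n(a)=|\{k\in\mathcal{J}_n: a_k=a_n\}|$ and $u_n(a)=\bar s/(1+c_n(a))$. Then for every pure strategy Nash equilibrium $a_{NE}$ of the game in which each player $n$ chooses $a_n\in\mathcal{M}$ to maximize $u_n$, the aggregate utility satisfies $$U(a_{NE})=\sum_{n\in\mathcal{N}}u_n(a_{NE})\ \ge\ \sum_{n\in\mathcal{N}}\frac{\bar s\,M}{M+|\mathcal{J}_n|}.$$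
   Context: A pure strategy Nash equilibrium is a profile $a^*\in\mathcal{M}^N$ such that for every $n\in\mathcal{N}$ and every $a_n\in\mathcal{M}$, $u_n(a_n^*,a_{-n}^* )\ge u_n(a_n,a_{-n}^* )$. The quantity $u_n(a)$ is the expected achievable transmission rate of player $n$: with probability $1/(1+c_n(a))$ it obtains the instantaneous rate of its chosen channel, otherwise $0$. *)

theory Defs
  imports "HOL-Probability.Probability"
begin

text \<open>The interference graph is given by a
  symmetric, irreflexive adjacency relation E on the players; the neighbour set
  of player n is J_n = {k in 1..N. E n k}.\<close>

definition neighbors :: "nat \<Rightarrow> (nat \<Rightarrow> nat \<Rightarrow> bool) \<Rightarrow> nat \<Rightarrow> nat set" where
  "neighbors N E n = {k \<in> {1..N}. E n k}"

definition congestion :: "nat \<Rightarrow> (nat \<Rightarrow> nat \<Rightarrow> bool) \<Rightarrow> (nat \<Rightarrow> nat) \<Rightarrow> nat \<Rightarrow> nat" where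
  "congestion N E a n = card {k \<in> neighbors N E n. a k = a n}"

definition utility :: "real \<Rightarrow> nat \<Rightarrow> (nat \<Rightarrow> nat \<Rightarrow> bool) \<Rightarrow> (nat \<Rightarrow> nat) \<Rightarrow> nat \<Rightarrow> real" where
  "utility sbar N E a n = sbar / (1 + real (congestion N E a n))"

definition is_profile :: "nat \<Rightarrow> nat \<Rightarrow> (nat \<Rightarrow> nat) \<Rightarrow> bool" where
  "is_profile N M a \<longleftrightarrow> (\<forall>k\<in>{1..N}. a k \<in> {1..M})"

definition pure_NE :: "real \<Rightarrow> nat \<Rightarrow> nat \<Rightarrow> (nat \<Rightarrow> nat \<Rightarrow> bool) \<Rightarrow> (nat \<Rightarrow> nat) \<Rightarrow> bool" where
  "pure_NE sbar N M E a \<longleftrightarrow> is_profile N M a \<and>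
     (\<forall>n\<in>{1..N}. \<forall>m\<in>{1..M}. utility sbar N E a n \<ge> utility sbar N E (a(n := m)) n)"

end

theory Submission
  imports Defs
begin

lemma per_player:
  fixes N M :: nat and E :: "nat \<Rightarrow> nat \<Rightarrow> bool" and sbar :: real and a :: "nat \<Rightarrow> nat"
  assumes M1: "M \<ge> 1" and irrefl: "\<And>i. \<not> E i i" and sb: "sbar \<ge> 0"
    and NE: "pure_NE sbar N M E a" and n: "n \<in> {1..N}"
  shows "utility sbar N E a n \<ge> sbar * real M / (real M + real (card (neighbors N E n)))"
proof (cases "sbar = 0")
  case True thus ?thesis by (simp add: utility_def)
next
  case False
  hence sp: "sbar > 0" using sb by simp
  define J where "J = neighbors N E n"
  define c where "c = congestion N E a n"
  have finJ: "finite J" unfolding J_def neighbors_def by simp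
  have nJ: "n \<notin> J" using irrefl unfolding J_def neighbors_def by simp
  have prof: "\<forall>k\<in>J. a k \<in> {1..M}" using NE unfolding pure_NE_def is_profile_def J_def neighbors_def by auto
  have cm: "congestion N E (a(n:=m)) n = card {k\<in>J. a k = m}" for m
  proof -
    have "{k \<in> J. (a(n:=m)) k = (a(n:=m)) n} = {k\<in>J. a k = m}" using nJ by auto
    thus ?thesis unfolding congestion_def J_def by simp
  qed
  have le: "real c \<le> real (card {k\<in>J. a k = m})" if m: "m \<in> {1..M}" for m
  proof -
    have "utility sbar N E a n \<ge> utility sbar N E (a(n := m)) n" using NE n m unfolding pure_NE_def by blast
    hence "sbar / (1 + real c) \<ge> sbar / (1 + real (card {k\<in>J. a k = m}))"
      unfolding utility_def c_def cm by simp
    thus ?thesis using sp by (simp add: divide_le_eq_1 field_simps)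
  qed
  have "(\<Sum>m\<in>{1..M}. card {k\<in>J. a k = m}) = (\<Sum>m\<in>{1..M}. \<Sum>k\<in>J. if a k = m then 1 else (0::nat))"
    using finJ by (simp add: sum.If_cases Int_def)
  also have "\<dots> = (\<Sum>k\<in>J. \<Sum>m\<in>{1..M}. if a k = m then 1 else (0::nat))" by (rule sum.swap)
  also have "\<dots> = (\<Sum>k\<in>J. 1)"
    by (rule sum.cong) (use prof in \<open>auto simp: sum.delta'\<close>)
  finally have tot: "(\<Sum>m\<in>{1..M}. card {k\<in>J. a k = m}) = card J" by simp
  have "real M * real c = (\<Sum>m\<in>{1..M}. real c)" by simp
  also have "\<dots> \<le> (\<Sum>m\<in>{1..M}. real (card {k\<in>J. a k = m}))" by (rule sum_mono) (use le in auto)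
  also have "\<dots> = real (card J)" using tot by (metis of_nat_sum)
  finally have key: "real M * real c \<le> real (card J)" .
  have "sbar * real M / (real M + real (card J)) \<le> sbar / (1 + real c)"
  proof -
    have pos1: "real M + real (card J) > 0" using M1 by simp
    have "sbar * real M * (1 + real c) \<le> sbar * (real M + real (card J))"
      using key sp by (simp add: algebra_simps)
    thus ?thesis using pos1 by (simp add: divide_simps)
  qed
  thus ?thesis unfolding utility_def c_def J_def by simp
qed

theorem theorem2:
  fixes N M :: nat and E :: "nat \<Rightarrow> nat \<Rightarrow> bool"
    and s :: "nat \<Rightarrow> real pmf" and sbar :: real and a :: "nat \<Rightarrow> nat"
  assumes "M \<ge> 1"
    and sym: "\<And>i j. E i j \<Longrightarrow> E j i"
    and irrefl: "\<And>i. \<not> E i i"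
    and fin: "\<And>m. m \<in> {1..M} \<Longrightarrow> finite (set_pmf (s m))"
    and nonneg: "\<And>m x. m \<in> {1..M} \<Longrightarrow> x \<in> set_pmf (s m) \<Longrightarrow> x \<ge> 0"
    and mean: "\<And>m. m \<in> {1..M} \<Longrightarrow> measure_pmf.expectation (s m) (\<lambda>x. x) = sbar"
    and NE: "pure_NE sbar N M E a"
  shows "(\<Sum>n\<in>{1..N}. utility sbar N E a n)
           \<ge> (\<Sum>n\<in>{1..N}. sbar * real M / (real M + real (card (neighbors N E n))))"
proof -
  have m1: "(1::nat) \<in> {1..M}" using assms(1) by simp
  have "measure_pmf.expectation (s 1) (\<lambda>x. x) \<ge> 0"
    by (rule integral_nonneg_AE) (use nonneg[OF m1] in \<open>auto simp: AE_measure_pmf_iff\<close>)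
  hence sb: "sbar \<ge> 0" using mean[OF m1] by simp
  show ?thesis
    by (rule sum_mono) (rule per_player[OF assms(1) irrefl sb NE], simp)
qed

end
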